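(* Let $\Omega\subset\mathbb{R}^n$ be a bounded domain with smooth boundary, let $a,b,c,m,d_1,d_2>0$, and let $k:\Omega\to\mathbb{R}$ satisfy $k\in C^1(\Omega)$, $k\ge0$, and $k$ does not vanish identically on any subset (or finite union of subsets) of $\Omega$ of positive measure. Consider $$u_t=d_1\Delta u+bu(1-u-cv),\qquad v_t=d_2\Delta v+v\Big(\frac{1}{1+k(x)u}-v-au-muv\Big)\quad\text{in }\Omega,$$ with homogeneous Neumann boundary conditions and spatially homogeneous positive initial data $u(x,0)\equiv u_0>0$, $v(x,0)\equiv v_0>0$. If $\widehat{k}:=\min_{x\in\Omega}k(x)>\frac1a-1$, then there exist such spatially homogeneous initial data for which the solution $(u,v)$ converges uniformly to the spatially homogeneous state $(1,0)$ as $t\to\infty$. *)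

theory Defs
  imports "HOL-Analysis.Analysis"
begin

definition pd :: "'n::finite \<Rightarrow> (real^'n \<Rightarrow> real) \<Rightarrow> real^'n \<Rightarrow> real" where
  "pd i f x = deriv (\<lambda>h. f (x + h *\<^sub>R axis i 1)) 0"

fun pdl :: "'n::finite list \<Rightarrow> (real^'n \<Rightarrow> real) \<Rightarrow> real^'n \<Rightarrow> real" where
  "pdl [] f = f"
| "pdl (i # is) f = pd i (pdl is f)"

definition grad :: "(real^'n::finite \<Rightarrow> real) \<Rightarrow> real^'n \<Rightarrow> real^'n" where
  "grad f x = (\<chi> i. pd i f x)"

definition smooth_on :: "(real^'n::finite) set \<Rightarrow> (real^'n \<Rightarrow> real) \<Rightarrow> bool" where
  "smooth_on U f \<longleftrightarrow>
     (\<forall>is. continuous_on U (pdl is f) \<and>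
        (\<forall>i. \<forall>x\<in>U. (\<lambda>h. pdl is f (x + h *\<^sub>R axis i 1)) differentiable (at 0)))"

definition smooth_defining_function :: "(real^'n::finite) set \<Rightarrow> (real^'n \<Rightarrow> real) \<Rightarrow> bool" where
  "smooth_defining_function \<Omega> \<rho> \<longleftrightarrow>
     smooth_on UNIV \<rho> \<and> \<Omega> = {x. \<rho> x < 0} \<and> (\<forall>x. \<rho> x = 0 \<longrightarrow> grad \<rho> x \<noteq> 0)"

definition smooth_bounded_domain :: "(real^'n::finite) set \<Rightarrow> bool" where
  "smooth_bounded_domain \<Omega> \<longleftrightarrow> open \<Omega> \<and> connected \<Omega> \<and> \<Omega> \<noteq> {} \<and> bounded \<Omega> \<and>
     (\<exists>\<rho>. smooth_defining_function \<Omega> \<rho>)"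

text \<open>Outward unit normal at boundary points (independent of the chosen defining function).\<close>
definition outer_normal :: "(real^'n::finite) set \<Rightarrow> real^'n \<Rightarrow> real^'n" where
  "outer_normal \<Omega> x =
     (let \<rho> = (SOME \<rho>. smooth_defining_function \<Omega> \<rho>) in sgn (grad \<rho> x))"

definition pdx :: "'n::finite \<Rightarrow> (real^'n \<Rightarrow> real \<Rightarrow> real) \<Rightarrow> real^'n \<Rightarrow> real \<Rightarrow> real" where
  "pdx i u x t = deriv (\<lambda>h. u (x + h *\<^sub>R axis i 1) t) 0"

definition pdt :: "(real^'n::finite \<Rightarrow> real \<Rightarrow> real) \<Rightarrow> real^'n \<Rightarrow> real \<Rightarrow> real" where
  "pdt u x t = deriv (u x) t"

definition laplacian :: "(real^'n::finite \<Rightarrow> real \<Rightarrow> real) \<Rightarrow> real^'n \<Rightarrow> real \<Rightarrow> real" where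
  "laplacian u x t = (\<Sum>i\<in>UNIV. pdx i (pdx i u) x t)"

text \<open>Classical regularity: u in C(closure Omega x [0,oo)) \<inter> C^{2,1}(Omega x (0,oo)),
  with gradient continuous up to the boundary for t > 0, and
  homogeneous Neumann boundary condition.\<close>
definition classical_neumann :: "(real^'n::finite) set \<Rightarrow> (real^'n \<Rightarrow> real \<Rightarrow> real) \<Rightarrow> bool" where
  "classical_neumann \<Omega> u \<longleftrightarrow>
     continuous_on (closure \<Omega> \<times> {0..}) (\<lambda>p. u (fst p) (snd p)) \<and>
     (\<forall>x\<in>\<Omega>. \<forall>t>0. u x differentiable (at t)) \<and>
     continuous_on (\<Omega> \<times> {0<..}) (\<lambda>p. pdt u (fst p) (snd p)) \<and>
     (\<forall>i. \<forall>x\<in>\<Omega>. \<forall>t>0. (\<lambda>h. u (x + h *\<^sub>R axis i 1) t) differentiable (at 0)) \<and>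
     (\<forall>i j. \<forall>x\<in>\<Omega>. \<forall>t>0. (\<lambda>h. pdx i u (x + h *\<^sub>R axis j 1) t) differentiable (at 0)) \<and>
     (\<forall>i j. continuous_on (\<Omega> \<times> {0<..}) (\<lambda>p. pdx j (pdx i u) (fst p) (snd p))) \<and>
     (\<exists>Du :: real^'n \<Rightarrow> real \<Rightarrow> real^'n.
        continuous_on (closure \<Omega> \<times> {0<..}) (\<lambda>p. Du (fst p) (snd p)) \<and>
        (\<forall>x\<in>closure \<Omega>. \<forall>t>0.
            ((\<lambda>y. u y t) has_derivative (\<lambda>h. Du x t \<bullet> h)) (at x within closure \<Omega>)) \<and>
        (\<forall>x\<in>frontier \<Omega>. \<forall>t>0. Du x t \<bullet> outer_normal \<Omega> x = 0))"

definition is_solution ::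
  "(real^'n::finite) set \<Rightarrow> real \<Rightarrow> real \<Rightarrow> real \<Rightarrow> real \<Rightarrow> real \<Rightarrow> real \<Rightarrow>
   (real^'n \<Rightarrow> real) \<Rightarrow> real \<Rightarrow> real \<Rightarrow>
   (real^'n \<Rightarrow> real \<Rightarrow> real) \<Rightarrow> (real^'n \<Rightarrow> real \<Rightarrow> real) \<Rightarrow> bool" where
  "is_solution \<Omega> a b c m d1 d2 k u0 v0 u v \<longleftrightarrow>
     classical_neumann \<Omega> u \<and> classical_neumann \<Omega> v \<and>
     (\<forall>x\<in>closure \<Omega>. u x 0 = u0 \<and> v x 0 = v0) \<and>
     (\<forall>x\<in>\<Omega>. \<forall>t>0.
        pdt u x t = d1 * laplacian u x t + b * u x t * (1 - u x t - c * v x t) \<and>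
        pdt v x t = d2 * laplacian v x t
          + v x t * (1 / (1 + k x * u x t) - v x t - a * u x t - m * u x t * v x t))"

end

theory Submission
  imports Defs
begin


lemma mvt_sym:
  fixes g :: "real \<Rightarrow> real"
  assumes "\<And>s. (g has_real_derivative g' s) (at s)"
  shows "\<exists>\<xi>. \<bar>\<xi>\<bar> \<le> \<bar>t\<bar> \<and> g t - g 0 = t * g' \<xi>"
proof (cases t "0::real" rule: linorder_cases)
  case less
  from MVT2[OF less, of g g'] assms obtain z where "t < z" "z < 0" "g 0 - g t = (0 - t) * g' z" by blast
  then show ?thesis by (intro exI[of _ z]) (auto simp: algebra_simps)
next
  case equal then show ?thesis by auto
next
  case greater
  from MVT2[OF greater, of g g'] assms obtain z where "0 < z" "z < t" "g t - g 0 = (t - 0) * g' z" by blast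
  then show ?thesis by (intro exI[of _ z]) auto
qed

lemma pd_deriv:
  assumes "(\<lambda>h. f (y + h *\<^sub>R axis i 1)) differentiable (at 0)"
  shows "((\<lambda>s. f (y + s *\<^sub>R axis i 1)) has_real_derivative pd i f y) (at 0)"
  using assms unfolding pd_def by (simp add: DERIV_deriv_iff_real_differentiable)

lemma pd_deriv_shift:
  assumes "(\<lambda>h. f ((y + s *\<^sub>R axis i 1) + h *\<^sub>R axis i 1)) differentiable (at 0)"
  shows "((\<lambda>s. f (y + s *\<^sub>R axis i 1)) has_real_derivative pd i f (y + s *\<^sub>R axis i 1)) (at s)"
proof -
  have "((\<lambda>h. f ((y + s *\<^sub>R axis i 1) + h *\<^sub>R axis i 1)) has_real_derivative pd i f (y + s *\<^sub>R axis i 1)) (at 0)"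
    by (rule pd_deriv[OF assms])
  then have "((\<lambda>h. f (y + (h + s) *\<^sub>R axis i 1)) has_real_derivative pd i f (y + s *\<^sub>R axis i 1)) (at 0)"
    by (simp add: scaleR_add_left algebra_simps)
  then show ?thesis using DERIV_shift[of "\<lambda>s. f (y + s *\<^sub>R axis i 1)" _ 0 s] by simp
qed



lemma frechet_partials:
  fixes f :: "real^'n::finite \<Rightarrow> real"
  assumes diff: "\<And>i y. (\<lambda>h. f (y + h *\<^sub>R axis i 1)) differentiable (at 0)"
    and cont: "\<And>i. isCont (pd i f) x"
  shows "(f has_derivative (\<lambda>h. grad f x \<bullet> h)) (at x)"
proof -
  have key: "\<forall>e>0. \<exists>d>0. \<forall>h. (\<forall>i. i \<notin> J \<longrightarrow> h$i = 0) \<and> norm h < d \<longrightarrow>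
      \<bar>f (x + h) - f x - (\<Sum>j\<in>J. h$j * pd j f x)\<bar> \<le> e * (\<Sum>j\<in>J. \<bar>h$j\<bar>)" if "finite J" for J
    using that
  proof (induction J rule: finite_induct)
    case empty
    show ?case
    proof (intro allI impI exI[of _ 1] conjI)
      fix e :: real and h :: "real^'n"
      assume "(\<forall>i. i \<notin> {} \<longrightarrow> h$i = 0) \<and> norm h < 1"
      then have "h = 0" by (simp add: vec_eq_iff)
      then show "\<bar>f (x + h) - f x - (\<Sum>j\<in>{}. h$j * pd j f x)\<bar> \<le> e * (\<Sum>j\<in>{}. \<bar>h$j\<bar>)" by simp
    qed simp
  next
    case (insert j J)
    show ?case
    proof (intro allI impI)
      fix e :: real assume e: "e > 0"
      from insert.IH e obtain d1 where d1: "d1 > 0" and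
        H1: "\<And>h. (\<forall>i. i \<notin> J \<longrightarrow> h$i = 0) \<and> norm h < d1 \<Longrightarrow>
           \<bar>f (x + h) - f x - (\<Sum>j\<in>J. h$j * pd j f x)\<bar> \<le> e * (\<Sum>j\<in>J. \<bar>h$j\<bar>)" by blast
      from cont[of j] e obtain d2 where d2: "d2 > 0" and
        H2: "\<And>y. dist y x < d2 \<Longrightarrow> dist (pd j f y) (pd j f x) < e"
        unfolding continuous_at_eps_delta by blast
      show "\<exists>d>0. \<forall>h. (\<forall>i. i \<notin> insert j J \<longrightarrow> h$i = 0) \<and> norm h < d \<longrightarrow>
        \<bar>f (x + h) - f x - (\<Sum>j\<in>insert j J. h$j * pd j f x)\<bar> \<le> e * (\<Sum>j\<in>insert j J. \<bar>h$j\<bar>)"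
      proof (intro exI[of _ "min d1 d2"] conjI allI impI)
        show "min d1 d2 > 0" using d1 d2 by simp
        fix h :: "real^'n"
        assume hh: "(\<forall>i. i \<notin> insert j J \<longrightarrow> h$i = 0) \<and> norm h < min d1 d2"
        define h' where "h' = (\<chi> i. if i = j then 0 else h$i)"
        have h'supp: "\<forall>i. i \<notin> J \<longrightarrow> h'$i = 0" using hh by (simp add: h'_def)
        have nh': "norm h' \<le> norm h"
          by (rule norm_le_componentwise_cart) (simp add: h'_def)
        have hdec: "h = h' + h$j *\<^sub>R axis j 1"
          by (simp add: vec_eq_iff h'_def axis_def)
        define g where "g s = f ((x + h') + s *\<^sub>R axis j 1)" for s
        have gd: "(g has_real_derivative pd j f ((x + h') + s *\<^sub>R axis j 1)) (at s)" for s
          unfolding g_def by (rule pd_deriv_shift[OF diff])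
        from mvt_sym[of g, OF gd, of "h$j"] obtain \<xi> where
          xi: "\<bar>\<xi>\<bar> \<le> \<bar>h$j\<bar>" and gm: "g (h$j) - g 0 = h$j * pd j f ((x + h') + \<xi> *\<^sub>R axis j 1)"
          by blast
        have "norm (h' + \<xi> *\<^sub>R axis j 1) \<le> norm h"
          by (rule norm_le_componentwise_cart) (use xi in \<open>auto simp: h'_def axis_def\<close>)
        then have "dist ((x + h') + \<xi> *\<^sub>R axis j 1) x < d2" using hh by (simp add: dist_norm)
        then have P: "\<bar>pd j f ((x + h') + \<xi> *\<^sub>R axis j 1) - pd j f x\<bar> < e"
          using H2 by (simp add: dist_real_def)
        have Q: "\<bar>f (x + h') - f x - (\<Sum>i\<in>J. h'$i * pd i f x)\<bar> \<le> e * (\<Sum>i\<in>J. \<bar>h'$i\<bar>)"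
          using H1[of h'] h'supp nh' hh by simp
        have sJ: "(\<Sum>i\<in>J. h'$i * pd i f x) = (\<Sum>i\<in>J. h$i * pd i f x)"
          "(\<Sum>i\<in>J. \<bar>h'$i\<bar>) = (\<Sum>i\<in>J. \<bar>h$i\<bar>)"
          using insert.hyps by (auto intro!: sum.cong simp: h'_def)
        have Q2: "\<bar>f (x + h') - f x - (\<Sum>i\<in>J. h'$i * pd i f x)\<bar> \<le> e * (\<Sum>i\<in>J. \<bar>h$i\<bar>)"
          using Q sJ(2) by simp
        have fx: "f (x + h) = g (h$j)" "f (x + h') = g 0"
          unfolding g_def using hdec by (metis add.assoc, simp)
        have "f (x + h) - f x - (\<Sum>i\<in>insert j J. h$i * pd i f x)
            = (f (x + h') - f x - (\<Sum>i\<in>J. h'$i * pd i f x))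
              + h$j * (pd j f ((x + h') + \<xi> *\<^sub>R axis j 1) - pd j f x)"
          using insert.hyps fx gm sJ by (simp add: algebra_simps)
        also have "\<bar>\<dots>\<bar> \<le> e * (\<Sum>i\<in>J. \<bar>h$i\<bar>) + \<bar>h$j\<bar> * e"
        proof -
          have "\<bar>h$j * (pd j f ((x + h') + \<xi> *\<^sub>R axis j 1) - pd j f x)\<bar> \<le> \<bar>h$j\<bar> * e"
            unfolding abs_mult using P by (intro mult_left_mono) auto
          then show ?thesis using Q2 abs_triangle_ineq[of "f (x + h') - f x - (\<Sum>i\<in>J. h'$i * pd i f x)"
              "h$j * (pd j f ((x + h') + \<xi> *\<^sub>R axis j 1) - pd j f x)"] by linarith
        qed
        also have "\<dots> = e * (\<Sum>i\<in>insert j J. \<bar>h$i\<bar>)"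
          using insert.hyps by (simp add: algebra_simps)
        finally show "\<bar>f (x + h) - f x - (\<Sum>j\<in>insert j J. h$j * pd j f x)\<bar> \<le> e * (\<Sum>j\<in>insert j J. \<bar>h$j\<bar>)" .
      qed
    qed
  qed
  show ?thesis
    unfolding has_derivative_at_alt
  proof (intro conjI allI impI)
    show "bounded_linear (\<lambda>h. grad f x \<bullet> h)" by (rule bounded_linear_inner_right)
    fix e :: real assume e: "e > 0"
    have cp: "real CARD('n) > 0" by simp
    have ep: "e / real CARD('n) > 0" using e by simp
    have "\<exists>d>0. \<forall>h. norm h < d \<longrightarrow>
        \<bar>f (x + h) - f x - (\<Sum>j\<in>UNIV. h$j * pd j f x)\<bar> \<le> (e / CARD('n)) * (\<Sum>j\<in>UNIV. \<bar>h$j\<bar>)"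
      using spec[OF key[of UNIV], of "e / real CARD('n)"] ep by simp
    then obtain d where d: "d > 0" and
      H: "\<And>h. norm h < d \<Longrightarrow>
        \<bar>f (x + h) - f x - (\<Sum>j\<in>UNIV. h$j * pd j f x)\<bar> \<le> (e / CARD('n)) * (\<Sum>j\<in>UNIV. \<bar>h$j\<bar>)"
      by blast
    show "\<exists>d>0. \<forall>y. norm (y - x) < d \<longrightarrow> norm (f y - f x - grad f x \<bullet> (y - x)) \<le> e * norm (y - x)"
    proof (intro exI[of _ d] conjI allI impI)
      show "d > 0" by fact
      fix y assume y: "norm (y - x) < d"
      have gi: "grad f x \<bullet> (y - x) = (\<Sum>j\<in>UNIV. (y - x)$j * pd j f x)"
        by (simp add: inner_vec_def grad_def mult.commute)
      have "(\<Sum>j\<in>UNIV. \<bar>(y - x)$j\<bar>) \<le> (\<Sum>j\<in>(UNIV::'n set). norm (y - x))"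
        by (intro sum_mono component_le_norm_cart)
      then have s: "(\<Sum>j\<in>UNIV. \<bar>(y - x)$j\<bar>) \<le> CARD('n) * norm (y - x)" by simp
      have "norm (f y - f x - grad f x \<bullet> (y - x)) \<le> (e / CARD('n)) * (\<Sum>j\<in>UNIV. \<bar>(y - x)$j\<bar>)"
        using H[OF y] gi by simp
      also have "\<dots> \<le> (e / CARD('n)) * (CARD('n) * norm (y - x))"
        using s e by (intro mult_left_mono) auto
      also have "\<dots> = e * norm (y - x)" by simp
      finally show "norm (f y - f x - grad f x \<bullet> (y - x)) \<le> e * norm (y - x)" .
    qed
  qed
qed



lemma second_deriv_min:
  fixes \<phi> \<psi> :: "real \<Rightarrow> real"
  assumes d: "d > 0" and mn: "\<And>r. \<bar>r\<bar> < d \<Longrightarrow> \<phi> r \<ge> \<phi> 0"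
    and d1: "\<And>r. \<bar>r\<bar> < d \<Longrightarrow> (\<phi> has_real_derivative \<psi> r) (at r)"
    and d2: "(\<psi> has_real_derivative D) (at 0)"
  shows "D \<ge> 0"
proof (rule ccontr)
  assume "\<not> D \<ge> 0" then have D: "D < 0" by simp
  have p0: "\<psi> 0 = 0"
    by (rule DERIV_local_min[OF d1[of 0] d]) (use d mn in auto)
  from DERIV_neg_dec_right[OF d2 D] obtain d' where d': "d' > 0"
    and dec: "\<And>h. h > 0 \<Longrightarrow> h < d' \<Longrightarrow> \<psi> 0 > \<psi> (0 + h)" by blast
  define r where "r = min d d' / 2"
  have r: "0 < r" "r < d" "r < d'" using d d' by (auto simp: r_def)
  have "\<And>x. 0 \<le> x \<Longrightarrow> x \<le> r \<Longrightarrow> (\<phi> has_real_derivative \<psi> x) (at x)"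
    using r by (intro d1) auto
  from MVT2[OF r(1) this] obtain z where z: "0 < z" "z < r" "\<phi> r - \<phi> 0 = (r - 0) * \<psi> z" by blast
  have "\<psi> z < 0" using dec[of z] z r p0 by simp
  then have "\<phi> r - \<phi> 0 < 0" using z r by (simp add: mult_pos_neg)
  with mn[of r] r show False by simp
qed

lemma left_min_deriv:
  fixes f :: "real \<Rightarrow> real"
  assumes "(f has_real_derivative D) (at t)" "t > 0"
    and "\<And>s. 0 \<le> s \<Longrightarrow> s \<le> t \<Longrightarrow> f s \<ge> f t"
  shows "D \<le> 0"
proof (rule ccontr)
  assume "\<not> D \<le> 0" then have "D > 0" by simp
  from DERIV_pos_inc_left[OF assms(1) this] obtain d where d: "d > 0"
    and H: "\<And>h. h > 0 \<Longrightarrow> h < d \<Longrightarrow> f (t - h) < f t" by blast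
  define h where "h = min d t / 2"
  have "h > 0" "h < d" "h \<le> t" using d assms(2) by (auto simp: h_def)
  with H[of h] assms(3)[of "t - h"] show False by simp
qed



lemma pdx_pd: "pdx i u x t = pd i (\<lambda>y. u y t) x"
  by (simp add: pdx_def pd_def)

lemma touch:
  fixes \<Omega> :: "(real^'n::finite) set" and w :: "real^'n \<Rightarrow> real \<Rightarrow> real"
  assumes om: "open \<Omega>"
    and cn: "classical_neumann \<Omega> w"
    and sdf: "smooth_defining_function \<Omega> \<rho>"
    and rho: "\<rho> = (SOME \<rho>. smooth_defining_function \<Omega> \<rho>)"
    and s: "s = 1 \<or> s = -1"
    and eps: "\<epsilon> > 0"
    and beta: "(\<beta> has_real_derivative \<beta>') (at ts)"
    and ts: "ts > 0"
    and xs: "xs \<in> closure \<Omega>"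
    and nonneg: "\<And>x t. x \<in> closure \<Omega> \<Longrightarrow> 0 \<le> t \<Longrightarrow> t \<le> ts \<Longrightarrow> s * (w x t - \<beta> t) + \<epsilon> * (\<rho> x + C) \<ge> 0"
    and zero: "s * (w xs ts - \<beta> ts) + \<epsilon> * (\<rho> xs + C) = 0"
  shows "xs \<in> \<Omega> \<and> s * pdt w xs ts \<le> s * \<beta>' \<and>
         s * laplacian w xs ts + \<epsilon> * (\<Sum>i\<in>UNIV. pd i (pd i \<rho>) xs) \<ge> 0"
proof -
  have sm: "smooth_on UNIV \<rho>" and Oeq: "\<Omega> = {x. \<rho> x < 0}" and gnz: "\<And>x. \<rho> x = 0 \<Longrightarrow> grad \<rho> x \<noteq> 0"
    using sdf unfolding smooth_defining_function_def by auto
  have sm_cont: "\<And>is. continuous_on UNIV (pdl is \<rho>)"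
    and sm_diff: "\<And>is i x. (\<lambda>h. pdl is \<rho> (x + h *\<^sub>R axis i 1)) differentiable (at 0)"
    using sm unfolding smooth_on_def by auto
  have rcont: "continuous_on UNIV \<rho>" using sm_cont[of "[]"] by simp
  have rdiff: "\<And>i x. (\<lambda>h. \<rho> (x + h *\<^sub>R axis i 1)) differentiable (at 0)" using sm_diff[of "[]"] by simp
  have pdcont: "\<And>i x. isCont (pd i \<rho>) x"
    using sm_cont[of "[_]"] by (simp add: continuous_on_eq_continuous_at)
  have pddiff: "\<And>i x. (\<lambda>h. pd i \<rho> (x + h *\<^sub>R axis i 1)) differentiable (at 0)"
    using sm_diff[of "[_]"] by simp
  obtain c1 c2 c3 c4 c5 c6 Du where
    c2: "\<forall>x\<in>\<Omega>. \<forall>t>0. w x differentiable (at t)" and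
    c4: "\<forall>i. \<forall>x\<in>\<Omega>. \<forall>t>0. (\<lambda>h. w (x + h *\<^sub>R axis i 1) t) differentiable (at 0)" and
    c5: "\<forall>i j. \<forall>x\<in>\<Omega>. \<forall>t>0. (\<lambda>h. pdx i w (x + h *\<^sub>R axis j 1) t) differentiable (at 0)" and
    Du1: "\<forall>x\<in>closure \<Omega>. \<forall>t>0. ((\<lambda>y. w y t) has_derivative (\<lambda>h. Du x t \<bullet> h)) (at x within closure \<Omega>)" and
    Du2: "\<forall>x\<in>frontier \<Omega>. \<forall>t>0. Du x t \<bullet> outer_normal \<Omega> x = 0"
    using cn unfolding classical_neumann_def by blast
  define Q where "Q y = s * (w y ts - \<beta> ts) + \<epsilon> * (\<rho> y + C)" for y
  have Qnn: "\<And>y. y \<in> closure \<Omega> \<Longrightarrow> Q y \<ge> 0" using nonneg ts unfolding Q_def by auto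
  have Q0: "Q xs = 0" using zero unfolding Q_def .
  have xsO: "xs \<in> \<Omega>"
  proof (rule ccontr)
    assume nx: "xs \<notin> \<Omega>"
    have "closure \<Omega> \<subseteq> {x. \<rho> x \<le> 0}"
      by (rule closure_minimal) (auto simp: Oeq intro!: closed_Collect_le rcont)
    with xs have "\<rho> xs \<le> 0" by auto
    moreover have "\<rho> xs \<ge> 0" using nx Oeq by auto
    ultimately have r0: "\<rho> xs = 0" by simp
    define g where "g = grad \<rho> xs"
    have gnz': "g \<noteq> 0" using gnz[OF r0] by (simp add: g_def)
    have fr: "xs \<in> frontier \<Omega>" using xs nx om by (simp add: frontier_def interior_open)
    have rD: "(\<rho> has_derivative (\<lambda>h. g \<bullet> h)) (at xs)"
      unfolding g_def by (rule frechet_partials[OF rdiff pdcont])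
    have pD: "((\<lambda>r::real. xs - r *\<^sub>R g) has_derivative (\<lambda>r. - (r *\<^sub>R g))) (at 0 within S)" for S
      by (auto intro!: derivative_eq_intros)
    have "((\<lambda>r. \<rho> (xs - r *\<^sub>R g)) has_derivative (\<lambda>r. g \<bullet> (- (r *\<^sub>R g)))) (at 0)"
    proof -
      have rD': "(\<rho> has_derivative (\<lambda>h. g \<bullet> h)) (at ((\<lambda>r::real. xs - r *\<^sub>R g) 0))" using rD by simp
      show ?thesis using has_derivative_compose[OF pD[of UNIV] rD'] by simp
    qed
    moreover have "(\<lambda>r. g \<bullet> (- (r *\<^sub>R g))) = (*) (- (g \<bullet> g))" by (auto simp: fun_eq_iff)
    ultimately have rpD: "((\<lambda>r. \<rho> (xs - r *\<^sub>R g)) has_real_derivative - (g \<bullet> g)) (at 0)"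
      by (simp add: has_field_derivative_def)
    have gg: "g \<bullet> g > 0" using gnz' by simp
    have "\<exists>d>0. \<forall>h>0. h < d \<longrightarrow> \<rho> (xs - 0 *\<^sub>R g) > \<rho> (xs - (0 + h) *\<^sub>R g)"
      by (rule DERIV_neg_dec_right[OF rpD]) (use gg in simp)
    then obtain d1 where d1: "d1 > 0" and
      H1: "\<And>h. h > 0 \<Longrightarrow> h < d1 \<Longrightarrow> \<rho> (xs - 0 *\<^sub>R g) > \<rho> (xs - (0 + h) *\<^sub>R g)"
      by blast
    have inO: "\<And>h. h > 0 \<Longrightarrow> h < d1 \<Longrightarrow> xs - h *\<^sub>R g \<in> \<Omega>"
      using H1 r0 Oeq by auto
    define S where "S = {r. xs - r *\<^sub>R g \<in> closure \<Omega>}"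
    have QD: "(Q has_derivative (\<lambda>h. s * (Du xs ts \<bullet> h) + \<epsilon> * (g \<bullet> h))) (at xs within closure \<Omega>)"
      unfolding Q_def
      using Du1 xs ts has_derivative_at_withinI[OF rD]
      by (auto intro!: derivative_eq_intros)
    have "(\<lambda>r. xs - r *\<^sub>R g) ` S \<subseteq> closure \<Omega>" by (auto simp: S_def)
    with QD have QD': "(Q has_derivative (\<lambda>h. s * (Du xs ts \<bullet> h) + \<epsilon> * (g \<bullet> h))) (at ((\<lambda>r. xs - r *\<^sub>R g) 0) within (\<lambda>r. xs - r *\<^sub>R g) ` S)"
      by (auto intro: has_derivative_subset)
    have comp: "((\<lambda>r. Q (xs - r *\<^sub>R g)) has_derivative (\<lambda>r. s * (Du xs ts \<bullet> (- (r *\<^sub>R g))) + \<epsilon> * (g \<bullet> (- (r *\<^sub>R g))))) (at 0 within S)"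
      using has_derivative_in_compose[OF pD[of S] QD'] by simp
    have "Du xs ts \<bullet> outer_normal \<Omega> xs = 0" using Du2 fr ts by auto
    moreover have "outer_normal \<Omega> xs = sgn g"
      unfolding outer_normal_def Let_def rho[symmetric] g_def ..
    ultimately have "Du xs ts \<bullet> sgn g = 0" by simp
    then have Dg: "Du xs ts \<bullet> g = 0"
      using gnz' by (simp add: sgn_div_norm)
    have "(\<lambda>r. s * (Du xs ts \<bullet> (- (r *\<^sub>R g))) + \<epsilon> * (g \<bullet> (- (r *\<^sub>R g)))) = (*) (- (\<epsilon> * (g \<bullet> g)))"
      using Dg by (auto simp: fun_eq_iff)
    with comp have QrD: "((\<lambda>r. Q (xs - r *\<^sub>R g)) has_real_derivative - (\<epsilon> * (g \<bullet> g))) (at 0 within S)"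
      by (simp add: has_field_derivative_def)
    then have "\<exists>d>0. \<forall>h>0. 0 + h \<in> S \<longrightarrow> h < d \<longrightarrow> Q (xs - 0 *\<^sub>R g) > Q (xs - (0 + h) *\<^sub>R g)"
      by (rule has_real_derivative_neg_dec_right) (use eps gg in simp)
    then obtain d2 where d2: "d2 > 0" and
      H2: "\<And>h. h > 0 \<Longrightarrow> 0 + h \<in> S \<Longrightarrow> h < d2 \<Longrightarrow> Q (xs - 0 *\<^sub>R g) > Q (xs - (0 + h) *\<^sub>R g)"
      by blast
    define h where "h = min d1 d2 / 2"
    have h: "h > 0" "h < d1" "h < d2" using d1 d2 by (auto simp: h_def)
    then have "xs - h *\<^sub>R g \<in> \<Omega>" using inO by simp
    then have hS: "h \<in> S" unfolding S_def using closure_subset by blast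
    have "Q xs > Q (xs - h *\<^sub>R g)" using H2[of h] h hS by simp
    moreover have "Q (xs - h *\<^sub>R g) \<ge> 0" using Qnn hS by (simp add: S_def)
    ultimately show False using Q0 by simp
  qed
  have time: "s * pdt w xs ts \<le> s * \<beta>'"
  proof -
    have "w xs differentiable (at ts)" using c2 xsO ts by auto
    then have wd: "(w xs has_real_derivative pdt w xs ts) (at ts)"
      by (simp add: pdt_def DERIV_deriv_iff_real_differentiable)
    have "((\<lambda>t. s * (w xs t - \<beta> t) + \<epsilon> * (\<rho> xs + C)) has_real_derivative s * (pdt w xs ts - \<beta>')) (at ts)"
      by (auto intro!: derivative_eq_intros wd beta)
    then have "s * (pdt w xs ts - \<beta>') \<le> 0"
      by (rule left_min_deriv[OF _ ts]) (use nonneg xs zero in auto)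
    then show ?thesis by (simp add: algebra_simps)
  qed
  have lap: "s * pd i (pd i (\<lambda>y. w y ts)) xs + \<epsilon> * pd i (pd i \<rho>) xs \<ge> 0" for i
  proof -
    obtain d where d: "d > 0" and dO: "ball xs d \<subseteq> \<Omega>" using om xsO open_contains_ball by blast
    have inO: "xs + r *\<^sub>R axis i 1 \<in> \<Omega>" if "\<bar>r\<bar> < d" for r
      using dO that by (auto simp: dist_norm)
    define \<phi> where "\<phi> r = Q (xs + r *\<^sub>R axis i 1)" for r
    define \<psi> where "\<psi> r = s * pd i (\<lambda>y. w y ts) (xs + r *\<^sub>R axis i 1) + \<epsilon> * pd i \<rho> (xs + r *\<^sub>R axis i 1)" for r
    have "\<phi> r \<ge> \<phi> 0" if "\<bar>r\<bar> < d" for r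
      using Qnn[of "xs + r *\<^sub>R axis i 1"] inO[OF that] Q0 closure_subset unfolding \<phi>_def by auto
    moreover have "(\<phi> has_real_derivative \<psi> r) (at r)" if "\<bar>r\<bar> < d" for r
    proof -
      have a: "((\<lambda>r. w (xs + r *\<^sub>R axis i 1) ts) has_real_derivative pd i (\<lambda>y. w y ts) (xs + r *\<^sub>R axis i 1)) (at r)"
        by (rule pd_deriv_shift[of "\<lambda>y. w y ts"]) (use c4 inO[OF that] ts in auto)
      have b: "((\<lambda>r. \<rho> (xs + r *\<^sub>R axis i 1)) has_real_derivative pd i \<rho> (xs + r *\<^sub>R axis i 1)) (at r)"
        by (rule pd_deriv_shift[OF rdiff])
      show ?thesis unfolding \<phi>_def \<psi>_def Q_def
        by (auto intro!: derivative_eq_intros a b)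
    qed
    moreover have "(\<psi> has_real_derivative (s * pd i (pd i (\<lambda>y. w y ts)) xs + \<epsilon> * pd i (pd i \<rho>) xs)) (at 0)"
    proof -
      have a: "((\<lambda>r. pd i (\<lambda>y. w y ts) (xs + r *\<^sub>R axis i 1)) has_real_derivative pd i (pd i (\<lambda>y. w y ts)) xs) (at 0)"
        by (rule pd_deriv) (use c5 xsO ts in \<open>auto simp: pdx_pd\<close>)
      have b: "((\<lambda>r. pd i \<rho> (xs + r *\<^sub>R axis i 1)) has_real_derivative pd i (pd i \<rho>) xs) (at 0)"
        by (rule pd_deriv[OF pddiff])
      show ?thesis unfolding \<psi>_def
        by (auto intro!: derivative_eq_intros a b)
    qed
    ultimately show ?thesis by (rule second_deriv_min[OF d])
  qed
  have "s * laplacian w xs ts + \<epsilon> * (\<Sum>i\<in>UNIV. pd i (pd i \<rho>) xs)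
      = (\<Sum>i\<in>UNIV. s * pd i (pd i (\<lambda>y. w y ts)) xs + \<epsilon> * pd i (pd i \<rho>) xs)"
    by (simp add: laplacian_def pdx_pd sum.distrib sum_distrib_left)
  also have "\<dots> \<ge> 0" by (rule sum_nonneg) (use lap in auto)
  finally show ?thesis using xsO time by simp
qed



lemma first_time:
  fixes Q :: "'a::metric_space \<Rightarrow> real \<Rightarrow> real"
  assumes K: "compact K"
    and cont: "continuous_on (K \<times> {0..T}) (\<lambda>p. Q (fst p) (snd p))"
    and init: "\<And>x. x \<in> K \<Longrightarrow> Q x 0 > 0"
    and bad: "x0 \<in> K" "0 \<le> t0" "t0 \<le> T" "Q x0 t0 \<le> 0"
  shows "\<exists>xs ts. xs \<in> K \<and> 0 < ts \<and> ts \<le> T \<and> Q xs ts = 0 \<and>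
           (\<forall>x\<in>K. \<forall>t. 0 \<le> t \<and> t \<le> ts \<longrightarrow> Q x t \<ge> 0)"
proof -
  define S where "S = {p \<in> K \<times> {0..T}. Q (fst p) (snd p) \<le> 0}"
  have KT: "compact (K \<times> {0..T})" using K by (intro compact_Times) auto
  have "closed S" unfolding S_def
    using continuous_on_closed_Collect_le[OF cont continuous_on_const, of 0] compact_imp_closed[OF KT] by simp
  then have "compact S"
    using compact_Int_closed[OF KT] by (metis (no_types, lifting) S_def inf.absorb_iff2 mem_Collect_eq subsetI)
  then have cS: "compact (snd ` S)" by (intro compact_continuous_image continuous_on_snd continuous_on_id)
  have "(x0, t0) \<in> S" using bad by (simp add: S_def)
  then have ne: "snd ` S \<noteq> {}" by blast
  from compact_attains_inf[OF cS ne] obtain ts where tsS: "ts \<in> snd ` S" and tmin: "\<And>t. t \<in> snd ` S \<Longrightarrow> ts \<le> t" by blast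
  from tsS obtain xs where xsS: "(xs, ts) \<in> S" by force
  have xsK: "xs \<in> K" and ts0: "0 \<le> ts" and tsT: "ts \<le> T" and Qle: "Q xs ts \<le> 0" using xsS by (auto simp: S_def)
  have tspos: "ts > 0"
  proof (rule ccontr)
    assume "\<not> ts > 0" then have "ts = 0" using ts0 by simp
    then show False using init[OF xsK] Qle by simp
  qed
  have pos: "Q x t > 0" if "x \<in> K" "0 \<le> t" "t < ts" for x t
  proof (rule ccontr)
    assume "\<not> Q x t > 0"
    then have "(x, t) \<in> S" using that tsT by (auto simp: S_def)
    then have "ts \<le> t" using tmin by force
    then show False using that by simp
  qed
  have ge: "Q x ts \<ge> 0" if x: "x \<in> K" for x
  proof (rule ccontr)
    assume "\<not> Q x ts \<ge> 0" then have neg: "Q x ts < 0" by simp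
    have "continuous_on {0..T} (\<lambda>t. Q x t)"
    proof -
      have "continuous_on {0..T} ((\<lambda>p. Q (fst p) (snd p)) \<circ> (\<lambda>t. (x, t)))"
        by (rule continuous_on_compose) (auto intro!: continuous_intros continuous_on_subset[OF cont] simp: x)
      then show ?thesis by (simp add: o_def)
    qed
    then obtain d where d: "d > 0" and H: "\<And>t. t \<in> {0..T} \<Longrightarrow> dist t ts < d \<Longrightarrow> dist (Q x t) (Q x ts) < - Q x ts"
      using ts0 tsT neg unfolding continuous_on_iff by (metis atLeastAtMost_iff neg_0_less_iff_less)
    define t where "t = ts - min d ts / 2"
    have t: "0 \<le> t" "t < ts" "dist t ts < d" using d tspos by (auto simp: t_def dist_real_def)
    have "dist (Q x t) (Q x ts) < - Q x ts" using H[of t] t tsT by auto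
    then have "Q x t < 0" by (simp add: dist_real_def)
    with pos[OF x t(1,2)] show False by simp
  qed
  show ?thesis
  proof (intro exI conjI ballI allI impI)
    show "xs \<in> K" "0 < ts" "ts \<le> T" by fact+
    show "Q xs ts = 0" using Qle ge[OF xsK] by simp
    fix x t assume "x \<in> K" "0 \<le> t \<and> t \<le> ts"
    then show "Q x t \<ge> 0"
    proof (cases "t = ts")
      case True then show ?thesis using ge \<open>x \<in> K\<close> by simp
    next
      case False then show ?thesis using pos[of x t] \<open>x \<in> K\<close> \<open>0 \<le> t \<and> t \<le> ts\<close> by simp
    qed
  qed
qed



lemma arith_ulow:
  fixes A B \<theta> \<sigma> b c d1 E eh u y ut lap :: real
  assumes P: "0 < A" "A \<le> 1/8" "0 < B" "0 \<le> \<theta>" "\<theta> \<le> A" "\<theta> \<le> B" "4*c*B \<le> A"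
     "\<sigma> \<le> b/8" "16*d1*\<theta> \<le> b*A" "b > 0" "c > 0" "d1 > 0"
    and E: "0 < E" "E \<le> 1" "0 \<le> eh" "eh \<le> \<theta>*E"
    and H: "u = 1 - A*E - eh" "y \<le> B*E + eh" "ut \<le> \<sigma>*A*E" "lap \<ge> -(\<theta>*E)"
       "ut = d1*lap + b*u*(1 - u - c*y)"
  shows False
proof -
  define X where "X = 1 - u - c*y"
  have f1: "c*y \<le> c*B*E + c*eh" using mult_left_mono[OF H(2), of c] P by (simp add: algebra_simps)
  have f2: "c*eh \<le> c*\<theta>*E" using mult_left_mono[OF E(4), of c] P by (simp add: algebra_simps)
  have f2b: "\<theta>*E \<le> B*E" using P E by (intro mult_right_mono) auto
  have f2c: "c*\<theta>*E \<le> c*B*E" using mult_left_mono[OF f2b, of c] P by (simp add: algebra_simps)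
  have f2d: "4*c*B*E \<le> A*E" using P E by (intro mult_right_mono) auto
  have X: "X \<ge> A*E/2" using f1 f2 f2c f2d H(1) E unfolding X_def by linarith
  have AE: "A*E \<le> A" "\<theta>*E \<le> \<theta>" using P E by (simp_all add: mult_left_le)
  have u: "u \<ge> 1/2" using H(1) AE E P by linarith
  have f3: "u*X \<ge> (1/2)*(A*E/2)" using u X P E by (intro mult_mono) auto
  have f4: "b*(u*X) \<ge> b*((1/2)*(A*E/2))" using f3 P by (intro mult_left_mono) auto
  have f5: "d1*lap \<ge> d1*(-(\<theta>*E))" using H(4) P by (intro mult_left_mono) auto
  have f5b: "16*d1*\<theta>*E \<le> b*A*E" using P E by (intro mult_right_mono) auto
  have f6: "\<sigma>*A*E \<le> (b/8)*A*E" using P E by (intro mult_right_mono) (auto simp: mult_nonneg_nonneg)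
  have pos: "b*A*E > 0" using P E by simp
  have "ut \<ge> b*A*E/4 - b*A*E/16"
    using H(5) f4 f5 f5b unfolding X_def by (simp add: algebra_simps)
  then show False using H(3) f6 pos by (simp add: algebra_simps)
qed

lemma arith_uup:
  fixes A B \<theta> \<sigma> b c d1 E eh u y ut lap :: real
  assumes P: "0 < A" "0 < B" "0 \<le> \<theta>" "\<theta> \<le> A" "\<theta> \<le> B" "4*c*B \<le> A"
     "\<sigma> \<le> b/8" "16*d1*\<theta> \<le> b*A" "b > 0" "c > 0" "d1 > 0"
    and E: "0 < E" "E \<le> 1" "0 \<le> eh" "eh \<le> \<theta>*E"
    and H: "u = 1 + A*E + eh" "-(B*E) - eh \<le> y" "ut \<ge> -(\<sigma>*A*E)" "lap \<le> \<theta>*E"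
       "ut = d1*lap + b*u*(1 - u - c*y)"
  shows False
proof -
  define X where "X = 1 - u - c*y"
  have f1: "-(c*B*E) - c*eh \<le> c*y" using mult_left_mono[OF H(2), of c] P by (simp add: algebra_simps)
  have f2: "c*eh \<le> c*\<theta>*E" using mult_left_mono[OF E(4), of c] P by (simp add: algebra_simps)
  have f2b: "\<theta>*E \<le> B*E" using P E by (intro mult_right_mono) auto
  have f2c: "c*\<theta>*E \<le> c*B*E" using mult_left_mono[OF f2b, of c] P by (simp add: algebra_simps)
  have f2d: "4*c*B*E \<le> A*E" using P E by (intro mult_right_mono) auto
  have X: "X \<le> -(A*E/2)" using f1 f2 f2c f2d H(1) E unfolding X_def by linarith
  have Xn: "X \<le> 0" using X mult_pos_pos[OF P(1) E(1)] by linarith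
  have u: "u \<ge> 1" using H(1) mult_pos_pos[OF P(1) E(1)] E(3) by linarith
  have f3: "u*X \<le> 1*X" using mult_right_mono_neg[OF u Xn] by simp
  have f4a: "b*(u*X) \<le> b*X" using f3 P by (intro mult_left_mono) auto
  have f4b: "b*X \<le> b*(-(A*E/2))" using X P by (intro mult_left_mono) auto
  have f4: "b*(u*X) \<le> b*(-(A*E/2))" using f4a f4b by linarith
  have f5: "d1*lap \<le> d1*(\<theta>*E)" using H(4) P by (intro mult_left_mono) auto
  have f5b: "16*d1*\<theta>*E \<le> b*A*E" using P E by (intro mult_right_mono) auto
  have f6: "\<sigma>*A*E \<le> (b/8)*A*E" using P E by (intro mult_right_mono) (auto simp: mult_nonneg_nonneg)
  have pos: "b*A*E > 0" using P E by simp
  have "ut \<le> b*A*E/16 - b*A*E/2"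
    using H(5) f4 f5 f5b unfolding X_def by (simp add: algebra_simps)
  then show False using H(3) f6 pos by (simp add: algebra_simps)
qed

lemma arith_vup:
  fixes B \<theta> \<sigma> \<delta> d2 E eh u y yt lap kk a m :: real
  assumes P: "0 < B" "0 \<le> \<theta>" "\<sigma> \<le> \<delta>/8" "8*d2*\<theta> \<le> \<delta>*B" "\<delta> > 0" "d2 > 0" "m > 0"
    and E: "0 < E" "E \<le> 1" "0 \<le> eh" "eh \<le> \<theta>*E"
    and H: "y = B*E + eh" "u > 0" "1/(1+kk*u) - a*u \<le> -(3/4)*\<delta>" "yt \<ge> -(\<sigma>*B*E)" "lap \<le> \<theta>*E"
       "yt = d2*lap + y*(1/(1+kk*u) - y - a*u - m*u*y)"
  shows False
proof -
  define F where "F = 1/(1+kk*u) - y - a*u - m*u*y"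
  have ypos: "y \<ge> B*E" "B*E > 0" using H(1) E P by auto
  have "m*u*y \<ge> 0" using P H(2) ypos by simp
  then have F: "F \<le> -(3/4)*\<delta>" using H(3) ypos unfolding F_def by linarith
  have f1: "y*F \<le> y*(-(3/4)*\<delta>)" using F ypos by (intro mult_left_mono) auto
  have f2: "y*(-(3/4)*\<delta>) \<le> (B*E)*(-(3/4)*\<delta>)" using ypos P by (intro mult_right_mono_neg) auto
  have f5: "d2*lap \<le> d2*(\<theta>*E)" using H(5) P by (intro mult_left_mono) auto
  have f5b: "8*d2*\<theta>*E \<le> \<delta>*B*E" using P E by (intro mult_right_mono) auto
  have f6: "\<sigma>*B*E \<le> (\<delta>/8)*B*E" using P E by (intro mult_right_mono) (auto simp: mult_nonneg_nonneg)
  have pos: "\<delta>*B*E > 0" using P E by simp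
  have "yt \<le> \<delta>*B*E/8 - (3/4)*\<delta>*B*E"
    using H(6) f1 f2 f5 f5b unfolding F_def by (simp add: algebra_simps)
  then show False using H(4) f6 pos by (simp add: algebra_simps)
qed

lemma arith_vlow:
  fixes B \<theta> \<sigma> \<delta> d2 E eh u y yt lap kk a m :: real
  assumes P: "0 < B" "0 \<le> \<theta>" "\<theta> \<le> B" "\<sigma> \<le> \<delta>/8" "8*d2*\<theta> \<le> \<delta>*B" "\<delta> > 0" "d2 > 0" "m > 0"
       "8*(1+2*m)*B \<le> \<delta>"
    and E: "0 < E" "E \<le> 1" "0 \<le> eh" "eh \<le> \<theta>*E"
    and H: "y = -(B*E) - eh" "u > 0" "u \<le> 2" "1/(1+kk*u) - a*u \<le> -(3/4)*\<delta>" "yt \<le> \<sigma>*B*E" "lap \<ge> -(\<theta>*E)"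
       "yt = d2*lap + y*(1/(1+kk*u) - y - a*u - m*u*y)"
  shows False
proof -
  define z where "z = -y"
  define F where "F = 1/(1+kk*u) - y - a*u - m*u*y"
  have Fz: "F = (1/(1+kk*u) - a*u) + z*(1 + m*u)" unfolding F_def z_def by (simp add: algebra_simps)
  have BE: "B*E \<le> B" "\<theta>*E \<le> \<theta>" using P E by (simp_all add: mult_left_le)
  have z: "z \<ge> B*E" "z \<le> 2*B" "B*E > 0" using H(1) E P BE mult_pos_pos[OF P(1) E(1)] unfolding z_def by linarith+
  have mu: "1 + m*u \<le> 1 + 2*m" using H(3) P by simp
  have "z*(1 + m*u) \<le> (2*B)*(1+2*m)" using z mu P H(2) by (intro mult_mono) auto
  then have F: "F \<le> -(\<delta>/2)" using Fz H(4) P(9) by (simp add: algebra_simps)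
  have f1: "z*(-F) \<ge> (B*E)*(\<delta>/2)" using z F P by (intro mult_mono) auto
  have yF: "y*F = z*(-F)" unfolding z_def by simp
  have f5: "d2*lap \<ge> d2*(-(\<theta>*E))" using H(6) P by (intro mult_left_mono) auto
  have f5b: "8*d2*\<theta>*E \<le> \<delta>*B*E" using P E by (intro mult_right_mono) auto
  have f6: "\<sigma>*B*E \<le> (\<delta>/8)*B*E" using P E by (intro mult_right_mono) (auto simp: mult_nonneg_nonneg)
  have pos: "\<delta>*B*E > 0" using P E by simp
  have "yt \<ge> (\<delta>/2)*B*E - \<delta>*B*E/8"
    using H(7) f1 yF f5 f5b unfolding F_def by (simp add: algebra_simps)
  then show False using H(5) f6 pos by (simp add: algebra_simps)
qed

lemma G_bound:
  fixes kk kh a u \<delta> \<eta> :: real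
  assumes "kk \<ge> kh" "kh \<ge> 0" "a > 0" "\<delta> = a - 1/(1+kh)" "\<eta> = \<delta>/(4*(1+a))" "u \<ge> 1 - \<eta>" "\<eta> \<le> 1/2" "\<delta> > 0"
  shows "1/(1+kk*u) - a*u \<le> -(3/4)*\<delta>"
proof -
  have eta0: "\<eta> \<ge> 0" using assms by simp
  have u0: "u \<ge> 0" "1 - \<eta> \<ge> 0" using assms(6,7) by linarith+
  have ku: "kk*u \<ge> kh*(1-\<eta>)" using assms u0 by (intro mult_mono) auto
  define p where "p = 1 + kh*(1-\<eta>)"
  define q where "q = 1 + kh"
  have p1: "p \<ge> 1" using assms u0 by (simp add: p_def)
  have q1: "q \<ge> 1" using assms by (simp add: q_def)
  have s1: "1/(1+kk*u) \<le> 1/p" unfolding p_def using ku p1 p_def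
    by (intro divide_left_mono) (auto simp: add_pos_pos)
  have eq0: "\<eta>*q \<ge> 0" using eta0 q1 by simp
  have "\<eta>*q*1 \<le> \<eta>*q*p" by (rule mult_left_mono[OF p1 eq0])
  then have "\<eta>*p*q \<ge> \<eta>*q" by (simp add: algebra_simps)
  moreover have "p + \<eta>*q - q = \<eta>" unfolding p_def q_def by (simp add: algebra_simps)
  ultimately have "q \<le> p + \<eta>*p*q" using eta0 by linarith
  then have s2: "1/p \<le> 1/q + \<eta>" using p1 q1 by (simp add: field_simps)
  have s3: "a*u \<ge> a*(1-\<eta>)" using assms by (intro mult_left_mono) auto
  have "1/(1+kk*u) - a*u \<le> 1/q + \<eta> - a*(1-\<eta>)" using s1 s2 s3 by linarith
  also have "\<dots> = -\<delta> + (1+a)*\<eta>" unfolding q_def assms(4) by (simp add: algebra_simps)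
  also have "(1+a)*\<eta> = \<delta>/4" using assms by (simp add: field_simps)
  finally show ?thesis by simp
qed



lemma main_bound:
  fixes \<Omega> :: "(real^'n::finite) set" and k :: "real^'n \<Rightarrow> real"
    and u v :: "real^'n \<Rightarrow> real \<Rightarrow> real"
  assumes om: "open \<Omega>" and Kc: "compact (closure \<Omega>)"
    and sdf: "smooth_defining_function \<Omega> \<rho>"
    and rho: "\<rho> = (SOME \<rho>. smooth_defining_function \<Omega> \<rho>)"
    and sol: "is_solution \<Omega> a b c m d1 d2 k 1 (B/2) u v"
    and pos: "a > 0" "b > 0" "c > 0" "m > 0" "d1 > 0" "d2 > 0"
    and kh: "\<And>x. x \<in> \<Omega> \<Longrightarrow> k x \<ge> kh" "kh \<ge> 0"
    and del: "\<delta> = a - 1/(1+kh)" "\<delta> > 0"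
    and eta: "\<eta> = \<delta>/(4*(1+a))" "\<eta> \<le> 1/4"
    and AA: "A = \<eta>/2"
    and P: "0 < B" "0 < \<theta>" "\<theta> \<le> A" "\<theta> \<le> B" "4*c*B \<le> A"
     "\<sigma> \<le> b/8" "16*d1*\<theta> \<le> b*A" "\<sigma> \<le> \<delta>/8" "8*d2*\<theta> \<le> \<delta>*B"
     "8*(1+2*m)*B \<le> \<delta>" "\<sigma> > 0"
    and M0: "\<And>x. x \<in> closure \<Omega> \<Longrightarrow> \<bar>\<rho> x\<bar> \<le> M0" "M0 \<ge> 0"
    and LL: "\<And>x. x \<in> closure \<Omega> \<Longrightarrow> \<bar>\<Sum>i\<in>UNIV. pd i (pd i \<rho>) x\<bar> \<le> L" "L \<ge> 0"
    and T: "T \<ge> 0" and x: "x \<in> closure \<Omega>"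
  shows "\<bar>u x T - 1\<bar> < (A+\<theta>)*exp(-\<sigma>*T) \<and> \<bar>v x T\<bar> < (B+\<theta>)*exp(-\<sigma>*T)"
proof -
  have cnu: "classical_neumann \<Omega> u" and cnv: "classical_neumann \<Omega> v"
    and init: "\<And>x. x \<in> closure \<Omega> \<Longrightarrow> u x 0 = 1 \<and> v x 0 = B/2"
    and equ: "\<And>x t. x \<in> \<Omega> \<Longrightarrow> t > 0 \<Longrightarrow> pdt u x t = d1 * laplacian u x t + b * u x t * (1 - u x t - c * v x t)"
    and eqv: "\<And>x t. x \<in> \<Omega> \<Longrightarrow> t > 0 \<Longrightarrow> pdt v x t = d2 * laplacian v x t
          + v x t * (1 / (1 + k x * u x t) - v x t - a * u x t - m * u x t * v x t)"
    using sol unfolding is_solution_def by auto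
  have ucont: "continuous_on (closure \<Omega> \<times> {0..}) (\<lambda>p. u (fst p) (snd p))"
    using cnu unfolding classical_neumann_def by blast
  have vcont: "continuous_on (closure \<Omega> \<times> {0..}) (\<lambda>p. v (fst p) (snd p))"
    using cnv unfolding classical_neumann_def by blast
  have rcont: "continuous_on UNIV \<rho>"
    using sdf unfolding smooth_defining_function_def smooth_on_def by (metis pdl.simps(1))
  define ET where "ET = exp(-\<sigma>*T)"
  have ET: "0 < ET" "ET \<le> 1" using T P by (auto simp: ET_def)
  define \<epsilon> where "\<epsilon> = \<theta>*ET/(2*M0 + L + 1)"
  have eps: "\<epsilon> > 0" using P ET M0 LL by (simp add: \<epsilon>_def)
  have epsH: "\<epsilon>*(\<rho> y + M0) \<le> \<theta>*ET" "0 \<le> \<epsilon>*(\<rho> y + M0)" if "y \<in> closure \<Omega>" for y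
  proof -
    have h: "0 \<le> \<rho> y + M0" "\<rho> y + M0 \<le> 2*M0 + L + 1" using M0(1)[OF that] LL by auto
    show "0 \<le> \<epsilon>*(\<rho> y + M0)" using h eps by simp
    have "\<epsilon>*(\<rho> y + M0) \<le> \<epsilon>*(2*M0 + L + 1)" using h eps by (intro mult_left_mono) auto
    also have "\<dots> = \<theta>*ET" using M0 LL by (simp add: \<epsilon>_def)
    finally show "\<epsilon>*(\<rho> y + M0) \<le> \<theta>*ET" .
  qed
  have epsL: "\<bar>\<epsilon> * (\<Sum>i\<in>UNIV. pd i (pd i \<rho>) y)\<bar> \<le> \<theta>*ET" if "y \<in> closure \<Omega>" for y
  proof -
    have "\<bar>\<epsilon> * (\<Sum>i\<in>UNIV. pd i (pd i \<rho>) y)\<bar> \<le> \<epsilon> * L" using LL(1)[OF that] eps by (simp add: abs_mult)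
    also have "\<dots> \<le> \<epsilon>*(2*M0 + L + 1)" using eps M0 by (intro mult_left_mono) auto
    also have "\<dots> = \<theta>*ET" using M0 LL by (simp add: \<epsilon>_def)
    finally show ?thesis .
  qed
  define q :: "real \<Rightarrow> (real^'n \<Rightarrow> real \<Rightarrow> real) \<Rightarrow> (real \<Rightarrow> real) \<Rightarrow> real^'n \<Rightarrow> real \<Rightarrow> real"
    where "q s w \<beta> y t = s * (w y t - \<beta> t) + \<epsilon> * (\<rho> y + M0)" for s w \<beta> y t
  define \<beta>1 where "\<beta>1 t = 1 - A*exp(-\<sigma>*t)" for t
  define \<beta>2 where "\<beta>2 t = 1 + A*exp(-\<sigma>*t)" for t
  define \<beta>3 where "\<beta>3 t = -(B*exp(-\<sigma>*t))" for t
  define \<beta>4 where "\<beta>4 t = B*exp(-\<sigma>*t)" for t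
  define Qm where "Qm y t = min (min (q 1 u \<beta>1 y t) (q (-1) u \<beta>2 y t)) (min (q 1 v \<beta>3 y t) (q (-1) v \<beta>4 y t))" for y t
  have Apos: "A > 0" using P by simp
  have allpos: "\<forall>y\<in>closure \<Omega>. \<forall>t. 0 \<le> t \<and> t \<le> T \<longrightarrow> Qm y t > 0"
  proof (rule ccontr)
    assume "\<not> ?thesis"
    then obtain x0 t0 where x0: "x0 \<in> closure \<Omega>" "0 \<le> t0" "t0 \<le> T" "Qm x0 t0 \<le> 0" by force
    have Qcont: "continuous_on (closure \<Omega> \<times> {0..T}) (\<lambda>p. Qm (fst p) (snd p))"
    proof -
      have uc: "continuous_on (closure \<Omega> \<times> {0..T}) (\<lambda>p. u (fst p) (snd p))"
        by (rule continuous_on_subset[OF ucont]) auto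
      have vc: "continuous_on (closure \<Omega> \<times> {0..T}) (\<lambda>p. v (fst p) (snd p))"
        by (rule continuous_on_subset[OF vcont]) auto
      have rc: "continuous_on (closure \<Omega> \<times> {0..T}) (\<lambda>p. \<rho> (fst p))"
        by (rule continuous_on_compose2[OF rcont]) (auto intro!: continuous_intros)
      show ?thesis unfolding Qm_def q_def \<beta>1_def \<beta>2_def \<beta>3_def \<beta>4_def
        by (intro continuous_intros uc vc rc)
    qed
    have Qinit: "Qm y 0 > 0" if "y \<in> closure \<Omega>" for y
      using init[OF that] epsH(2)[OF that] Apos P
      unfolding Qm_def q_def \<beta>1_def \<beta>2_def \<beta>3_def \<beta>4_def by auto
    from first_time[OF Kc Qcont Qinit x0] obtain xs ts where
      xs: "xs \<in> closure \<Omega>" "0 < ts" "ts \<le> T" "Qm xs ts = 0" and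
      nn: "\<And>y t. y \<in> closure \<Omega> \<Longrightarrow> 0 \<le> t \<Longrightarrow> t \<le> ts \<Longrightarrow> Qm y t \<ge> 0" by blast
    have nn1: "\<And>y t. y \<in> closure \<Omega> \<Longrightarrow> 0 \<le> t \<Longrightarrow> t \<le> ts \<Longrightarrow> 1 * (u y t - \<beta>1 t) + \<epsilon> * (\<rho> y + M0) \<ge> 0"
      using nn unfolding Qm_def q_def by force
    have nn2: "\<And>y t. y \<in> closure \<Omega> \<Longrightarrow> 0 \<le> t \<Longrightarrow> t \<le> ts \<Longrightarrow> (-1) * (u y t - \<beta>2 t) + \<epsilon> * (\<rho> y + M0) \<ge> 0"
      using nn unfolding Qm_def q_def by force
    have nn3: "\<And>y t. y \<in> closure \<Omega> \<Longrightarrow> 0 \<le> t \<Longrightarrow> t \<le> ts \<Longrightarrow> 1 * (v y t - \<beta>3 t) + \<epsilon> * (\<rho> y + M0) \<ge> 0"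
      using nn unfolding Qm_def q_def by force
    have nn4: "\<And>y t. y \<in> closure \<Omega> \<Longrightarrow> 0 \<le> t \<Longrightarrow> t \<le> ts \<Longrightarrow> (-1) * (v y t - \<beta>4 t) + \<epsilon> * (\<rho> y + M0) \<ge> 0"
      using nn unfolding Qm_def q_def by force
    define E where "E = exp(-\<sigma>*ts)"
    have E: "0 < E" "E \<le> 1" "ET \<le> E" using xs P by (auto simp: E_def ET_def)
    define eh where "eh = \<epsilon> * (\<rho> xs + M0)"
    have thE: "\<theta>*ET \<le> \<theta>*E" using E P by (intro mult_left_mono) auto
    have eh: "0 \<le> eh" "eh \<le> \<theta>*E" using epsH[OF xs(1)] thE by (auto simp: eh_def)
    have eL: "\<bar>\<epsilon> * (\<Sum>i\<in>UNIV. pd i (pd i \<rho>) xs)\<bar> \<le> \<theta>*E" using epsL[OF xs(1)] thE by simp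
    have AE: "A*E \<le> A" using E Apos by (simp add: mult_left_le)
    have thE1: "\<theta>*E \<le> \<theta>" using E P by (simp add: mult_left_le)
    have b1: "u xs ts \<ge> 1 - A*E - eh" using nn1[OF xs(1) _ order_refl] xs by (simp add: \<beta>1_def E_def eh_def)
    have b2: "u xs ts \<le> 1 + A*E + eh" using nn2[OF xs(1) _ order_refl] xs by (simp add: \<beta>2_def E_def eh_def)
    have b3: "v xs ts \<ge> -(B*E) - eh" using nn3[OF xs(1) _ order_refl] xs by (simp add: \<beta>3_def E_def eh_def)
    have b4: "v xs ts \<le> B*E + eh" using nn4[OF xs(1) _ order_refl] xs by (simp add: \<beta>4_def E_def eh_def)
    have etaA: "\<eta> = 2*A" using AA by simp
    have upos: "u xs ts > 0" "u xs ts \<le> 2" "u xs ts \<ge> 1 - \<eta>" using b1 b2 AE eh thE1 P eta etaA by linarith+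
    have d1: "(\<beta>1 has_real_derivative \<sigma>*A*E) (at ts)" unfolding \<beta>1_def E_def
      by (auto intro!: derivative_eq_intros)
    have d2: "(\<beta>2 has_real_derivative -(\<sigma>*A*E)) (at ts)" unfolding \<beta>2_def E_def
      by (auto intro!: derivative_eq_intros)
    have d3: "(\<beta>3 has_real_derivative \<sigma>*B*E) (at ts)" unfolding \<beta>3_def E_def
      by (auto intro!: derivative_eq_intros)
    have d4: "(\<beta>4 has_real_derivative -(\<sigma>*B*E)) (at ts)" unfolding \<beta>4_def E_def
      by (auto intro!: derivative_eq_intros)
    have Pcomm: "0 < A" "A \<le> 1/8" using Apos AA eta(2) by linarith+
    have zero: "q 1 u \<beta>1 xs ts = 0 \<or> q (-1) u \<beta>2 xs ts = 0 \<or> q 1 v \<beta>3 xs ts = 0 \<or> q (-1) v \<beta>4 xs ts = 0"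
      using xs(4) unfolding Qm_def by linarith
    have eta12: "\<eta> \<le> 1/2" using eta(2) by linarith
    have Gb: "1/(1 + k xs * u xs ts) - a * u xs ts \<le> -(3/4)*\<delta>" if "xs \<in> \<Omega>"
      by (rule G_bound[OF kh(1)[OF that] kh(2) pos(1) del(1) eta(1) upos(3) eta12 del(2)])
    have th0: "0 \<le> \<theta>" using P(2) by simp
    have sp: "(1::real) = 1 \<or> (1::real) = -1" and sm: "(-1::real) = 1 \<or> (-1::real) = -1" by simp_all
    show False
    proof -
      { assume z: "q 1 u \<beta>1 xs ts = 0"
        from touch[OF om cnu sdf rho sp eps d1 xs(2) xs(1) nn1 ] z
        have T1: "xs \<in> \<Omega>" "pdt u xs ts \<le> \<sigma>*A*E"
          "laplacian u xs ts + \<epsilon> * (\<Sum>i\<in>UNIV. pd i (pd i \<rho>) xs) \<ge> 0"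
          unfolding q_def by auto
        have lapb: "laplacian u xs ts \<ge> -(\<theta>*E)" using T1(3) eL by linarith
        have ueq: "u xs ts = 1 - A*E - eh" using z unfolding q_def \<beta>1_def E_def eh_def by simp
        have False
          by (rule arith_ulow[OF Pcomm P(1) th0 P(3,4,5,6,7) pos(2,3,5) E(1,2) eh ueq b4 T1(2) lapb equ[OF T1(1) xs(2)]]) }
      moreover
      { assume z: "q (-1) u \<beta>2 xs ts = 0"
        from touch[OF om cnu sdf rho sm eps d2 xs(2) xs(1) nn2 ] z
        have T1: "xs \<in> \<Omega>" "pdt u xs ts \<ge> -(\<sigma>*A*E)"
          "- laplacian u xs ts + \<epsilon> * (\<Sum>i\<in>UNIV. pd i (pd i \<rho>) xs) \<ge> 0"
          unfolding q_def by auto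
        have lapb: "laplacian u xs ts \<le> \<theta>*E" using T1(3) eL by linarith
        have ueq: "u xs ts = 1 + A*E + eh" using z unfolding q_def \<beta>2_def E_def eh_def by simp
        have False
          by (rule arith_uup[OF Pcomm(1) P(1) th0 P(3,4,5,6,7) pos(2,3,5) E(1,2) eh ueq b3 T1(2) lapb equ[OF T1(1) xs(2)]]) }
      moreover
      { assume z: "q 1 v \<beta>3 xs ts = 0"
        from touch[OF om cnv sdf rho sp eps d3 xs(2) xs(1) nn3 ] z
        have T1: "xs \<in> \<Omega>" "pdt v xs ts \<le> \<sigma>*B*E"
          "laplacian v xs ts + \<epsilon> * (\<Sum>i\<in>UNIV. pd i (pd i \<rho>) xs) \<ge> 0"
          unfolding q_def by auto
        have lapb: "laplacian v xs ts \<ge> -(\<theta>*E)" using T1(3) eL by linarith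
        have veq: "v xs ts = -(B*E) - eh" using z unfolding q_def \<beta>3_def E_def eh_def by simp
        have False
          by (rule arith_vlow[OF P(1) th0 P(4,8,9) del(2) pos(6,4) P(10) E(1,2) eh veq upos(1,2) Gb[OF T1(1)] T1(2) lapb eqv[OF T1(1) xs(2)]]) }
      moreover
      { assume z: "q (-1) v \<beta>4 xs ts = 0"
        from touch[OF om cnv sdf rho sm eps d4 xs(2) xs(1) nn4 ] z
        have T1: "xs \<in> \<Omega>" "pdt v xs ts \<ge> -(\<sigma>*B*E)"
          "- laplacian v xs ts + \<epsilon> * (\<Sum>i\<in>UNIV. pd i (pd i \<rho>) xs) \<ge> 0"
          unfolding q_def by auto
        have lapb: "laplacian v xs ts \<le> \<theta>*E" using T1(3) eL by linarith
        have veq: "v xs ts = B*E + eh" using z unfolding q_def \<beta>4_def E_def eh_def by simp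
        have False
          by (rule arith_vup[OF P(1) th0 P(8,9) del(2) pos(6,4) E(1,2) eh veq upos(1) Gb[OF T1(1)] T1(2) lapb eqv[OF T1(1) xs(2)]]) }
      ultimately show False using zero by blast
    qed
  qed
  have QT: "Qm x T > 0" using allpos x T by auto
  have ehx: "\<epsilon> * (\<rho> x + M0) \<le> \<theta>*ET" using epsH[OF x] by simp
  show ?thesis
    using QT ehx unfolding Qm_def q_def \<beta>1_def \<beta>2_def \<beta>3_def \<beta>4_def ET_def
    by (auto simp: algebra_simps abs_less_iff)
qed



theorem theorem14:
  fixes \<Omega> :: "(real^'n::finite) set"
    and k :: "real^'n \<Rightarrow> real"
    and a b c m d1 d2 :: real
  assumes "smooth_bounded_domain \<Omega>"
    and "a > 0" "b > 0" "c > 0" "m > 0" "d1 > 0" "d2 > 0"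
    and "\<exists>g :: real^'n \<Rightarrow> real^'n. continuous_on \<Omega> g \<and>
           (\<forall>x\<in>\<Omega>. (k has_derivative (\<lambda>h. g x \<bullet> h)) (at x))"
    and "\<forall>x\<in>\<Omega>. k x \<ge> 0"
    and "\<forall>S. S \<subseteq> \<Omega> \<and> S \<in> sets lebesgue \<and> emeasure lebesgue S > 0 \<longrightarrow> (\<exists>x\<in>S. k x \<noteq> 0)"
    and "Inf (k ` \<Omega>) > 1 / a - 1"
  shows "\<exists>u0 v0. u0 > 0 \<and> v0 > 0 \<and>
           (\<forall>u v. is_solution \<Omega> a b c m d1 d2 k u0 v0 u v \<longrightarrow>
              (\<forall>\<epsilon>>0. \<exists>T. \<forall>t\<ge>T. \<forall>x\<in>closure \<Omega>. \<bar>u x t - 1\<bar> < \<epsilon> \<and> \<bar>v x t\<bar> < \<epsilon>))"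
proof -
  have om: "open \<Omega>" and ne: "\<Omega> \<noteq> {}" and bd: "bounded \<Omega>" and ex: "\<exists>\<rho>. smooth_defining_function \<Omega> \<rho>"
    using assms(1) unfolding smooth_bounded_domain_def by auto
  define \<rho> where "\<rho> = (SOME \<rho>. smooth_defining_function \<Omega> \<rho>)"
  have sdf: "smooth_defining_function \<Omega> \<rho>" unfolding \<rho>_def by (rule someI_ex[OF ex])
  have Kc: "compact (closure \<Omega>)" using bd by (simp add: compact_closure)
  have sm_cont: "\<And>is. continuous_on UNIV (pdl is \<rho>)"
    using sdf unfolding smooth_defining_function_def smooth_on_def by auto
  have rcont: "continuous_on UNIV \<rho>" using sm_cont[of "[]"] by simp
  have lcont: "continuous_on UNIV (\<lambda>x. \<Sum>i\<in>UNIV. pd i (pd i \<rho>) x)"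
    using sm_cont by (intro continuous_on_sum) (metis pdl.simps)
  have "bounded (\<rho> ` closure \<Omega>)"
    by (intro compact_imp_bounded compact_continuous_image continuous_on_subset[OF rcont] Kc) auto
  then obtain M where M: "\<And>x. x \<in> closure \<Omega> \<Longrightarrow> \<bar>\<rho> x\<bar> \<le> M" unfolding bounded_iff by auto
  define M0 where "M0 = max M 0"
  have M0: "\<And>x. x \<in> closure \<Omega> \<Longrightarrow> \<bar>\<rho> x\<bar> \<le> M0" "M0 \<ge> 0" using M by (auto simp: M0_def le_max_iff_disj)
  have "bounded ((\<lambda>x. \<Sum>i\<in>UNIV. pd i (pd i \<rho>) x) ` closure \<Omega>)"
    by (intro compact_imp_bounded compact_continuous_image continuous_on_subset[OF lcont] Kc) auto
  then obtain L' where L': "\<And>x. x \<in> closure \<Omega> \<Longrightarrow> \<bar>\<Sum>i\<in>UNIV. pd i (pd i \<rho>) x\<bar> \<le> L'" unfolding bounded_iff by auto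
  define L where "L = max L' 0"
  have LL: "\<And>x. x \<in> closure \<Omega> \<Longrightarrow> \<bar>\<Sum>i\<in>UNIV. pd i (pd i \<rho>) x\<bar> \<le> L" "L \<ge> 0" using L' by (auto simp: L_def le_max_iff_disj)
  define kh where "kh = Inf (k ` \<Omega>)"
  have bdd: "bdd_below (k ` \<Omega>)" using assms(9) by (intro bdd_belowI[of _ 0]) auto
  have kh: "\<And>x. x \<in> \<Omega> \<Longrightarrow> k x \<ge> kh" unfolding kh_def by (rule cInf_lower[OF _ bdd]) auto
  have kh0: "kh \<ge> 0" unfolding kh_def using ne assms(9) by (intro cInf_greatest) auto
  have khgt: "kh > 1/a - 1" using assms(11) by (simp add: kh_def)
  define \<delta> where "\<delta> = a - 1/(1+kh)"
  have "1/a < 1 + kh" using khgt by simp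
  then have "(1/a) * a < (1 + kh) * a" using assms(2) by (intro mult_strict_right_mono) auto
  then have "1 < (1 + kh) * a" using assms(2) by simp
  then have "1/(1+kh) < a" using kh0 by (simp add: divide_less_eq mult.commute)
  then have del: "\<delta> > 0" by (simp add: \<delta>_def)
  have dela: "\<delta> \<le> a" using kh0 by (simp add: \<delta>_def)
  define \<eta> where "\<eta> = \<delta>/(4*(1+a))"
  have "\<eta> \<le> a/(4*(1+a))" unfolding \<eta>_def using dela assms(2) by (intro divide_right_mono) auto
  also have "a/(4*(1+a)) \<le> 1/4" using assms(2) by (simp add: field_simps)
  finally have eta: "\<eta> \<le> 1/4" .
  have etapos: "\<eta> > 0" using del assms(2) by (simp add: \<eta>_def)
  define A where "A = \<eta>/2"
  define B where "B = min (A/(4*c)) (\<delta>/(8*(1+2*m)))"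
  define \<theta> where "\<theta> = min (min A B) (min (b*A/(16*d1)) (\<delta>*B/(8*d2)))"
  define \<sigma> where "\<sigma> = min (b/8) (\<delta>/8)"
  have Apos: "A > 0" using etapos by (simp add: A_def)
  have Bpos: "B > 0" using Apos del assms(3-7) by (simp add: B_def)
  have thpos: "\<theta> > 0" using Apos Bpos del assms(3-7) by (simp add: \<theta>_def)
  have P3: "\<theta> \<le> A" "\<theta> \<le> B" by (simp_all add: \<theta>_def)
  have "B \<le> A/(4*c)" by (simp add: B_def)
  then have P5: "4*c*B \<le> A" using assms(4) by (simp add: field_simps)
  have "\<theta> \<le> b*A/(16*d1)" by (simp add: \<theta>_def)
  then have P7: "16*d1*\<theta> \<le> b*A" using assms(6) by (simp add: field_simps)
  have "\<theta> \<le> \<delta>*B/(8*d2)" by (simp add: \<theta>_def)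
  then have P9: "8*d2*\<theta> \<le> \<delta>*B" using assms(7) by (simp add: field_simps)
  have "B \<le> \<delta>/(8*(1+2*m))" by (simp add: B_def)
  then have P10: "8*(1+2*m)*B \<le> \<delta>" using assms(5) by (simp add: field_simps)
  have P6: "\<sigma> \<le> b/8" "\<sigma> \<le> \<delta>/8" by (simp_all add: \<sigma>_def)
  have spos: "\<sigma> > 0" using assms(3) del by (simp add: \<sigma>_def)
  have main: "\<forall>u v. is_solution \<Omega> a b c m d1 d2 k 1 (B/2) u v \<longrightarrow>
              (\<forall>e>0. \<exists>T. \<forall>t\<ge>T. \<forall>x\<in>closure \<Omega>. \<bar>u x t - 1\<bar> < e \<and> \<bar>v x t\<bar> < e)"
  proof (intro allI impI)
    fix u v e
    assume sol: "is_solution \<Omega> a b c m d1 d2 k 1 (B/2) u v" and e: "(e::real) > 0"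
    have bnd: "\<bar>u x t - 1\<bar> < (A+\<theta>)*exp(-\<sigma>*t) \<and> \<bar>v x t\<bar> < (B+\<theta>)*exp(-\<sigma>*t)"
      if "t \<ge> 0" "x \<in> closure \<Omega>" for x t
      by (rule main_bound[OF om Kc sdf \<rho>_def sol assms(2-7) kh kh0 \<delta>_def del \<eta>_def eta A_def
            Bpos thpos P3 P5 P6(1) P7 P6(2) P9 P10 spos M0 LL that])
    define Mx where "Mx = A + B + 2*\<theta> + 1"
    have Mx: "Mx > 0" "A + \<theta> < Mx" "B + \<theta> < Mx" using Apos Bpos thpos by (auto simp: Mx_def)
    define T0 where "T0 = max 0 (ln (Mx/e) / \<sigma>)"
    show "\<exists>T. \<forall>t\<ge>T. \<forall>x\<in>closure \<Omega>. \<bar>u x t - 1\<bar> < e \<and> \<bar>v x t\<bar> < e"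
    proof (intro exI[of _ T0] allI impI ballI)
      fix t x assume t: "T0 \<le> t" and x: "x \<in> closure \<Omega>"
      have t0: "t \<ge> 0" using t by (simp add: T0_def)
      have "ln (Mx/e) / \<sigma> \<le> t" using t by (simp add: T0_def)
      then have "ln (Mx/e) \<le> \<sigma>*t" using spos by (simp add: divide_le_eq mult.commute)
      then have "exp(-\<sigma>*t) \<le> exp(-ln (Mx/e))" by simp
      also have "\<dots> = e/Mx" using Mx e by (simp add: exp_diff ln_div)
      finally have ex: "exp(-\<sigma>*t) \<le> e/Mx" .
      have "(A+\<theta>)*exp(-\<sigma>*t) \<le> (A+\<theta>)*(e/Mx)" using ex Apos thpos by (intro mult_left_mono) auto
      also have "\<dots> < Mx*(e/Mx)" using Mx e by (intro mult_strict_right_mono) auto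
      also have "\<dots> = e" using Mx by simp
      finally have e1: "(A+\<theta>)*exp(-\<sigma>*t) < e" .
      have "(B+\<theta>)*exp(-\<sigma>*t) \<le> (B+\<theta>)*(e/Mx)" using ex Bpos thpos by (intro mult_left_mono) auto
      also have "\<dots> < Mx*(e/Mx)" using Mx e by (intro mult_strict_right_mono) auto
      also have "\<dots> = e" using Mx by simp
      finally have e2: "(B+\<theta>)*exp(-\<sigma>*t) < e" .
      show "\<bar>u x t - 1\<bar> < e \<and> \<bar>v x t\<bar> < e" using bnd[OF t0 x] e1 e2 by linarith
    qed
  qed
  show ?thesis
    by (rule exI[of _ 1], rule exI[of _ "B/2"]) (use Bpos main in auto)
qed

end
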